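(* Let $\overline D\subseteq\mathbb F_q^n$, let $D\subseteq\mathcal O^n$ be its preimage under reduction mod $\pi$, and let $f\in\mathcal O[x]$ have no critical points in $D$. Let $g\in\mathcal O[x]$, let $\beta$ be an integer with $\beta>2c(f,D)+1$, and put $F(x)=f(x)+\pi^\beta g(x)$. Then $$\int_D|f(x)|^s|dx|=\int_D|F(x)|^s|dx|.$$
   Context: $K$ is a $p$-adic field with ring of integers $\mathcal O$, uniformizer $\pi$, residue field $\mathbb F_q$, valuation $v$, $|\xi|=q^{-v(\xi)}$, normalized Haar measure $|dx|$. A critical point of $f$ in $D$ is $P\in D$ with $\partial f/\partial x_i(P)=0$ for all $i$. For $P$ not critical, $\ell(f,P)=\min_i v(\partial f/\partial x_i(P))$, and $c(f,D)=\sup_{P\in D}\ell(f,P)$ (finite when $f$ has no critical points in the compact set $D$). *)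

theory Defs
  imports "HOL-Analysis.Analysis"
begin

text \<open>The valuation v is only meaningful on nonzero elements; v(0) = infinity is
encoded by the predicate vge below.\<close>

definition vge :: "('a::field \<Rightarrow> int) \<Rightarrow> 'a \<Rightarrow> int \<Rightarrow> bool" where
  "vge v x k \<longleftrightarrow> x = 0 \<or> v x \<ge> k"

definition ring_int :: "('a::field \<Rightarrow> int) \<Rightarrow> 'a set" where
  "ring_int v = {x. vge v x 0}"

text \<open>K is a p-adic field (a finite extension of Q_p): a field of characteristic 0,
complete for a discrete valuation v normalised by v(pi) = 1 (pi a uniformizer),
with finite residue field O / pi O of cardinality q.\<close>

definition is_padic_field :: "('a::field_char_0 \<Rightarrow> int) \<Rightarrow> 'a \<Rightarrow> nat \<Rightarrow> bool" where
  "is_padic_field v \<pi> q \<longleftrightarrow>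
     (\<forall>x y. x \<noteq> 0 \<longrightarrow> y \<noteq> 0 \<longrightarrow> v (x * y) = v x + v y) \<and>
     (\<forall>x y. x \<noteq> 0 \<longrightarrow> y \<noteq> 0 \<longrightarrow> x + y \<noteq> 0 \<longrightarrow> v (x + y) \<ge> min (v x) (v y)) \<and>
     \<pi> \<noteq> 0 \<and> v \<pi> = 1 \<and>
     (\<exists>R. finite R \<and> card R = q \<and> R \<subseteq> ring_int v \<and>
          (\<forall>x\<in>ring_int v. \<exists>!r. r \<in> R \<and> vge v (x - r) 1)) \<and>
     (\<forall>s :: nat \<Rightarrow> 'a.
        (\<forall>k. \<exists>N. \<forall>m\<ge>N. \<forall>n\<ge>N. vge v (s m - s n) k) \<longrightarrow>
        (\<exists>L. \<forall>k. \<exists>N. \<forall>m\<ge>N. vge v (s m - L) k))"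

text \<open>Normalised absolute value |x| = q^(-v(x)), |0| = 0, and |x|^s for complex s
(with 0^s = 0).\<close>

definition absK :: "('a::field \<Rightarrow> int) \<Rightarrow> nat \<Rightarrow> 'a \<Rightarrow> real" where
  "absK v q x = (if x = 0 then 0 else real q powr (- real_of_int (v x)))"

definition abs_pow :: "('a::field \<Rightarrow> int) \<Rightarrow> nat \<Rightarrow> 'a \<Rightarrow> complex \<Rightarrow> complex" where
  "abs_pow v q x s = complex_of_real (absK v q x) powr s"

section \<open>Polynomials in n variables (n = CARD('n)), as finitely supported coefficient maps\<close>

definition is_poly_over :: "'a set \<Rightarrow> (('n::finite \<Rightarrow> nat) \<Rightarrow> 'a::field) \<Rightarrow> bool" where
  "is_poly_over A c \<longleftrightarrow> finite {\<alpha>. c \<alpha> \<noteq> 0} \<and> (\<forall>\<alpha>. c \<alpha> \<in> A)"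

definition mpoly_eval :: "(('n::finite \<Rightarrow> nat) \<Rightarrow> 'a::field) \<Rightarrow> ('n \<Rightarrow> 'a) \<Rightarrow> 'a" where
  "mpoly_eval c x = (\<Sum>\<alpha>\<in>{\<alpha>. c \<alpha> \<noteq> 0}. c \<alpha> * (\<Prod>i\<in>UNIV. x i ^ \<alpha> i))"

definition mpoly_pd :: "'n \<Rightarrow> (('n::finite \<Rightarrow> nat) \<Rightarrow> 'a::field) \<Rightarrow> ('n \<Rightarrow> nat) \<Rightarrow> 'a" where
  "mpoly_pd i c = (\<lambda>\<alpha>. of_nat (\<alpha> i + 1) * c (\<alpha>(i := \<alpha> i + 1)))"

definition critical_point :: "(('n::finite \<Rightarrow> nat) \<Rightarrow> 'a::field) \<Rightarrow> ('n \<Rightarrow> 'a) \<Rightarrow> bool" where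
  "critical_point f P \<longleftrightarrow> (\<forall>i. mpoly_eval (mpoly_pd i f) P = 0)"

definition ell :: "('a::field \<Rightarrow> int) \<Rightarrow> (('n::finite \<Rightarrow> nat) \<Rightarrow> 'a) \<Rightarrow> ('n \<Rightarrow> 'a) \<Rightarrow> int" where
  "ell v f P = Min {v (mpoly_eval (mpoly_pd i f) P) | i. mpoly_eval (mpoly_pd i f) P \<noteq> 0}"

definition cfD :: "('a::field \<Rightarrow> int) \<Rightarrow> (('n::finite \<Rightarrow> nat) \<Rightarrow> 'a) \<Rightarrow> ('n \<Rightarrow> 'a) set \<Rightarrow> ereal" where
  "cfD v f D = (SUP P\<in>D. ereal (real_of_int (ell v f P)))"

definition On :: "('a::field \<Rightarrow> int) \<Rightarrow> ('n \<Rightarrow> 'a) set" where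
  "On v = {x. \<forall>i. x i \<in> ring_int v}"

definition vball :: "('a::field \<Rightarrow> int) \<Rightarrow> ('n \<Rightarrow> 'a) \<Rightarrow> int \<Rightarrow> ('n \<Rightarrow> 'a) set" where
  "vball v a k = {x. \<forall>i. vge v (x i - a i) k}"

text \<open>D is the preimage under reduction mod pi (O^n -> F_q^n) of some subset of F_q^n,
i.e. D is a union of residue classes a + pi O^n with a in O^n.\<close>
definition residue_preimage :: "('a::field \<Rightarrow> int) \<Rightarrow> ('n \<Rightarrow> 'a) set \<Rightarrow> bool" where
  "residue_preimage v D \<longleftrightarrow> D \<subseteq> On v \<and> (\<forall>a\<in>D. vball v a 1 \<subseteq> D)"

text \<open>The normalised Haar measure on O^n: Borel sets (generated by the balls),
with measure(a + pi^k O^n) = q^(-k n) for a in O^n, k >= 0 (this determines it).\<close>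
definition is_haar_On :: "('a::field \<Rightarrow> int) \<Rightarrow> nat \<Rightarrow> ('n::finite \<Rightarrow> 'a) measure \<Rightarrow> bool" where
  "is_haar_On v q M \<longleftrightarrow>
     space M = On v \<and>
     sets M = sigma_sets (On v) {vball v a k | a k. a \<in> On v \<and> k \<ge> 0} \<and>
     (\<forall>a\<in>On v. \<forall>k\<ge>0. emeasure M (vball v a k) =
         ennreal (real q powr (- real_of_int (k * int CARD('n)))))"

end

theory Submission
  imports Defs
begin

locale padic =
  fixes v :: "'a::field_char_0 \<Rightarrow> int" and \<pi> :: 'a and q :: nat
  assumes K: "is_padic_field v \<pi> q"
begin

lemma vmult: "x \<noteq> 0 \<Longrightarrow> y \<noteq> 0 \<Longrightarrow> v (x * y) = v x + v y"
  using K unfolding is_padic_field_def by blast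

lemma vadd: "x \<noteq> 0 \<Longrightarrow> y \<noteq> 0 \<Longrightarrow> x + y \<noteq> 0 \<Longrightarrow> v (x + y) \<ge> min (v x) (v y)"
  using K unfolding is_padic_field_def by blast

lemma pi_nz: "\<pi> \<noteq> 0" and vpi: "v \<pi> = 1"
  using K unfolding is_padic_field_def by blast+

lemma residues: "\<exists>R. finite R \<and> card R = q \<and> R \<subseteq> ring_int v \<and>
          (\<forall>x\<in>ring_int v. \<exists>!r. r \<in> R \<and> vge v (x - r) 1)"
  using K unfolding is_padic_field_def by blast

lemma v1: "v 1 = 0"
  using vmult[of 1 1] by simp

lemma vneg1: "v (-1) = 0"
  using vmult[of "-1" "-1"] v1 by simp

lemma vneg: "v (- x) = v x"
proof (cases "x = 0")
  case False
  then show ?thesis using vmult[of "-1" x] vneg1 by simp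
qed simp

lemma vinv: "x \<noteq> 0 \<Longrightarrow> v (inverse x) = - v x"
  using vmult[of x "inverse x"] v1 by simp

lemma vge_0[simp]: "vge v 0 k" by (simp add: vge_def)

lemma vge_mono: "vge v x k \<Longrightarrow> l \<le> k \<Longrightarrow> vge v x l"
  by (auto simp: vge_def)

lemma vge_add: "vge v x k \<Longrightarrow> vge v y k \<Longrightarrow> vge v (x + y) k"
  unfolding vge_def
  by (metis add.commute add_0 dual_order.trans min.bounded_iff vadd)

lemma vge_neg: "vge v (- x) k = vge v x k"
  by (simp add: vge_def vneg)

lemma vge_diff: "vge v x k \<Longrightarrow> vge v y k \<Longrightarrow> vge v (x - y) k"
  using vge_add[of x k "-y"] vge_neg by simp

lemma vge_diff_sym: "vge v (x - y) k = vge v (y - x) k"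
  by (metis minus_diff_eq vge_neg)

lemma vge_mult: "vge v x k \<Longrightarrow> vge v y l \<Longrightarrow> vge v (x * y) (k + l)"
  by (cases "x = 0 \<or> y = 0") (auto simp: vge_def vmult)

lemma vge_sum: "(\<And>i. i \<in> S \<Longrightarrow> vge v (f i) k) \<Longrightarrow> vge v (sum f S) k"
  by (induction S rule: infinite_finite_induct) (auto intro: vge_add)

lemma vge_1: "vge v 1 0" by (simp add: vge_def v1)

lemma vge_of_nat: "vge v (of_nat n) 0"
  by (induction n) (auto intro: vge_add vge_1)

lemma vge_pow: "vge v x 0 \<Longrightarrow> vge v (x ^ n) 0"
  by (induction n) (auto intro: vge_1 dest: vge_mult)

lemma vge_prod: "(\<And>i. i \<in> S \<Longrightarrow> vge v (f i) 0) \<Longrightarrow> vge v (prod f S) 0"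
proof (induction S rule: infinite_finite_induct)
  case (insert x F)
  then show ?case using vge_mult[of "f x" 0 "prod f F" 0] by simp
qed (auto intro: vge_1)

lemma powi_nz: "\<pi> powi k \<noteq> 0"
  using pi_nz by simp

lemma vpowi: "v (\<pi> powi k) = k"
proof -
  have n: "v (\<pi> ^ n) = int n" for n
    by (induction n) (auto simp: v1 vmult pi_nz vpi)
  show ?thesis
  proof (cases "k \<ge> 0")
    case True
    then show ?thesis using n[of "nat k"] by (simp add: power_int_def)
  next
    case False
    then have "\<pi> powi k = inverse (\<pi> ^ nat (-k))"
      by (simp add: power_int_def power_inverse)
    then show ?thesis using n[of "nat (-k)"] pi_nz False
      by (simp add: vinv)
  qed
qed

lemma vge_pimul: "vge v (\<pi> powi k * y) j = vge v y (j - k)"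
proof (cases "y = 0")
  case False
  then have "v (\<pi> powi k * y) = k + v y" using vmult[OF powi_nz False] vpowi by simp
  moreover have "\<pi> powi k * y \<noteq> 0" using False powi_nz by simp
  ultimately show ?thesis using False unfolding vge_def by auto
qed simp

lemma vge_powi: "k \<ge> j \<Longrightarrow> vge v (\<pi> powi k) j"
  by (simp add: vge_def vpowi)

lemma vge_unit: "v u = 0 \<Longrightarrow> u \<noteq> 0 \<Longrightarrow> vge v (u * y) j = vge v y j"
  by (cases "y = 0") (auto simp: vge_def vmult)

lemma vge_div_powi: "vge v x j \<Longrightarrow> vge v (x / \<pi> powi k) (j - k)"
proof -
  assume "vge v x j"
  moreover have "x = \<pi> powi k * (x / \<pi> powi k)" using powi_nz by simp
  ultimately show ?thesis using vge_pimul by metis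
qed

lemma q_ge2: "q \<ge> 2"
proof -
  obtain R where R: "finite R" "card R = q" "R \<subseteq> ring_int v"
    "\<forall>x\<in>ring_int v. \<exists>!r. r \<in> R \<and> vge v (x - r) 1"
    using residues by blast
  have O0: "0 \<in> ring_int v" and O1: "1 \<in> ring_int v"
    by (auto simp: ring_int_def vge_1)
  obtain r0 where r0: "r0 \<in> R" "vge v (0 - r0) 1" using R(4) O0 by blast
  obtain r1 where r1: "r1 \<in> R" "vge v (1 - r1) 1" using R(4) O1 by blast
  have "r0 \<noteq> r1"
  proof
    assume "r0 = r1"
    then have "vge v ((1 - r1) - (0 - r0)) 1" using r0 r1 vge_diff by blast
    then show False using \<open>r0 = r1\<close> by (simp add: vge_def v1)
  qed
  then have "card {r0, r1} \<le> card R" using r0 r1 R(1) by (intro card_mono) auto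
  then show ?thesis using \<open>r0 \<noteq> r1\<close> R(2) by simp
qed

end


definition good :: "('a::field \<Rightarrow> int) \<Rightarrow> (('n::finite \<Rightarrow> 'a) \<Rightarrow> 'a) \<Rightarrow> ('n \<Rightarrow> ('n \<Rightarrow> 'a) \<Rightarrow> 'a) \<Rightarrow> bool" where
"good v h dh \<longleftrightarrow> (\<forall>a\<in>On v. vge v (h a) 0 \<and> (\<forall>i. vge v (dh i a) 0)) \<and>
  (\<forall>a b m. a \<in> On v \<longrightarrow> b \<in> On v \<longrightarrow> m \<ge> 0 \<longrightarrow> (\<forall>i. vge v (b i - a i) m) \<longrightarrow>
     vge v (h b - h a - (\<Sum>i\<in>UNIV. dh i a * (b i - a i))) (2*m) \<and> (\<forall>i. vge v (dh i b - dh i a) m))"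

context padic
begin

lemma On_vge: "x \<in> On v \<Longrightarrow> vge v (x i) 0"
  by (simp add: On_def ring_int_def)

lemma vge_mult': "vge v x k \<Longrightarrow> vge v y l \<Longrightarrow> j \<le> k + l \<Longrightarrow> vge v (x * y) j"
  using vge_mult vge_mono by blast

lemma goodD1: "good v h dh \<Longrightarrow> a \<in> On v \<Longrightarrow> vge v (h a) 0"
  and goodD2: "good v h dh \<Longrightarrow> a \<in> On v \<Longrightarrow> vge v (dh i a) 0"
  by (auto simp: good_def)

lemma goodD3: "good v h dh \<Longrightarrow> a \<in> On v \<Longrightarrow> b \<in> On v \<Longrightarrow> m \<ge> 0 \<Longrightarrow> (\<And>i. vge v (b i - a i) m) \<Longrightarrow>
     vge v (h b - h a - (\<Sum>i\<in>UNIV. dh i a * (b i - a i))) (2*m)"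
  and goodD4: "good v h dh \<Longrightarrow> a \<in> On v \<Longrightarrow> b \<in> On v \<Longrightarrow> m \<ge> 0 \<Longrightarrow> (\<And>i. vge v (b i - a i) m) \<Longrightarrow>
     vge v (dh i b - dh i a) m"
  by (auto simp: good_def)

lemma lin_vge: "a \<in> On v \<Longrightarrow> good v h dh \<Longrightarrow> (\<And>i. vge v (b i - a i) m) \<Longrightarrow>
    vge v (\<Sum>i\<in>UNIV. dh i a * (b i - a i)) m"
  by (intro vge_sum) (auto intro: vge_mult'[of _ 0 _ m] goodD2)

lemma goodD5: "good v h dh \<Longrightarrow> a \<in> On v \<Longrightarrow> b \<in> On v \<Longrightarrow> m \<ge> 0 \<Longrightarrow> (\<And>i. vge v (b i - a i) m) \<Longrightarrow>
     vge v (h b - h a) m"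
proof -
  assume g: "good v h dh" and a: "a \<in> On v" and b: "b \<in> On v" and m: "m \<ge> 0"
    and c: "\<And>i. vge v (b i - a i) m"
  have "vge v (h b - h a - (\<Sum>i\<in>UNIV. dh i a * (b i - a i))) m"
    using goodD3[OF g a b m c] m vge_mono by fastforce
  moreover have "vge v (\<Sum>i\<in>UNIV. dh i a * (b i - a i)) m" using lin_vge[OF a g c] .
  ultimately show ?thesis using vge_add by fastforce
qed

lemma good_cong: "good v h dh \<Longrightarrow> (\<And>i x. dh' i x = dh i x) \<Longrightarrow> good v h dh'"
proof -
  assume "good v h dh" "\<And>i x. dh' i x = dh i x"
  then have "dh' = dh" by (intro ext) auto
  then show ?thesis using \<open>good v h dh\<close> by simp
qed

lemma good_const: "vge v c 0 \<Longrightarrow> good v (\<lambda>x. c) (\<lambda>i x. 0)"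
  by (simp add: good_def)

lemma good_coord: "good v (\<lambda>x::'n::finite \<Rightarrow> 'a. x j) (\<lambda>i x. if i = j then 1 else 0)"
proof -
  have s: "(\<Sum>i\<in>UNIV. (if i = j then 1 else 0) * (b i - a i)) = b j - a j" for a b :: "'n \<Rightarrow> 'a"
  proof -
    have "(\<Sum>i\<in>UNIV. (if i = j then 1 else 0) * (b i - a i)) = (\<Sum>i\<in>UNIV. if i = j then b i - a i else 0)"
      by (intro sum.cong) auto
    then show ?thesis by simp
  qed
  show ?thesis unfolding good_def s by (auto simp: On_vge vge_1)
qed

lemma good_add: fixes h1 :: "('n::finite \<Rightarrow> 'a) \<Rightarrow> 'a" shows "good v h1 d1 \<Longrightarrow> good v h2 d2 \<Longrightarrow> good v (\<lambda>x. h1 x + h2 x) (\<lambda>i x. d1 i x + d2 i x)"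
proof -
  assume g1: "good v h1 d1" and g2: "good v h2 d2"
  show ?thesis unfolding good_def
  proof (intro conjI ballI allI impI)
    fix a :: "'n \<Rightarrow> 'a" assume a: "a \<in> On v"
    show "vge v (h1 a + h2 a) 0" using goodD1[OF g1 a] goodD1[OF g2 a] vge_add by blast
    fix i show "vge v (d1 i a + d2 i a) 0" using goodD2[OF g1 a] goodD2[OF g2 a] vge_add by blast
  next
    fix a b :: "'n \<Rightarrow> 'a" and m :: int
    assume a: "a \<in> On v" and b: "b \<in> On v" and m: "0 \<le> m" and c: "\<forall>i. vge v (b i - a i) m"
    have eq: "h1 b + h2 b - (h1 a + h2 a) - (\<Sum>i\<in>UNIV. (d1 i a + d2 i a) * (b i - a i)) =
      (h1 b - h1 a - (\<Sum>i\<in>UNIV. d1 i a * (b i - a i))) + (h2 b - h2 a - (\<Sum>i\<in>UNIV. d2 i a * (b i - a i)))"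
      by (simp add: distrib_right sum.distrib)
    have c': "\<And>i. vge v (b i - a i) m" using c by blast
    show "vge v (h1 b + h2 b - (h1 a + h2 a) - (\<Sum>i\<in>UNIV. (d1 i a + d2 i a) * (b i - a i))) (2 * m)"
      unfolding eq by (rule vge_add[OF goodD3[OF g1 a b m c'] goodD3[OF g2 a b m c']])
  next
    fix a b :: "'n \<Rightarrow> 'a" and m :: int and i
    assume a: "a \<in> On v" and b: "b \<in> On v" and m: "0 \<le> m" and c: "\<forall>i. vge v (b i - a i) m"
    have eq: "d1 i b + d2 i b - (d1 i a + d2 i a) = (d1 i b - d1 i a) + (d2 i b - d2 i a)" by simp
    have c': "\<And>i. vge v (b i - a i) m" using c by blast
    show "vge v (d1 i b + d2 i b - (d1 i a + d2 i a)) m"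
      unfolding eq by (rule vge_add[OF goodD4[OF g1 a b m c'] goodD4[OF g2 a b m c']])
  qed
qed

lemma good_mult: fixes h1 :: "('n::finite \<Rightarrow> 'a) \<Rightarrow> 'a" shows "good v h1 d1 \<Longrightarrow> good v h2 d2 \<Longrightarrow>
   good v (\<lambda>x. h1 x * h2 x) (\<lambda>i x. d1 i x * h2 x + h1 x * d2 i x)"
proof -
  assume g1: "good v h1 d1" and g2: "good v h2 d2"
  show ?thesis unfolding good_def
  proof (intro conjI ballI allI impI)
    fix a :: "'n \<Rightarrow> 'a" assume a: "a \<in> On v"
    show "vge v (h1 a * h2 a) 0" using vge_mult[OF goodD1[OF g1 a] goodD1[OF g2 a]] by simp
    fix i show "vge v (d1 i a * h2 a + h1 a * d2 i a) 0"
      using vge_mult[OF goodD2[OF g1 a] goodD1[OF g2 a]] vge_mult[OF goodD1[OF g1 a] goodD2[OF g2 a]]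
      by (intro vge_add) simp_all
  next
    fix a b :: "'n \<Rightarrow> 'a" and m :: int
    assume a: "a \<in> On v" and b: "b \<in> On v" and m: "0 \<le> m" and c: "\<forall>i. vge v (b i - a i) m"
    define D1 where "D1 = (\<Sum>i\<in>UNIV. d1 i a * (b i - a i))"
    define D2 where "D2 = (\<Sum>i\<in>UNIV. d2 i a * (b i - a i))"
    have s: "(\<Sum>i\<in>UNIV. (d1 i a * h2 a + h1 a * d2 i a) * (b i - a i)) = D1 * h2 a + h1 a * D2"
    proof -
      have "\<And>i. (d1 i a * h2 a + h1 a * d2 i a) * (b i - a i) = (d1 i a * (b i - a i)) * h2 a + h1 a * (d2 i a * (b i - a i))"
        by (simp add: algebra_simps)
      then show ?thesis unfolding D1_def D2_def
        by (simp only: sum.distrib sum_distrib_left sum_distrib_right)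
    qed
    have e: "h1 b * h2 b - h1 a * h2 a - (D1 * h2 a + h1 a * D2) =
       (h1 b - h1 a - D1) * h2 b + h1 a * (h2 b - h2 a - D2) + D1 * (h2 b - h2 a)"
      by (simp add: algebra_simps)
    have 1: "vge v ((h1 b - h1 a - D1) * h2 b) (2*m)"
      using goodD3[OF g1 a b m] c goodD1[OF g2 b] unfolding D1_def by (intro vge_mult') auto
    have 2: "vge v (h1 a * (h2 b - h2 a - D2)) (2*m)"
      using goodD3[OF g2 a b m] c goodD1[OF g1 a] unfolding D2_def by (intro vge_mult') auto
    have 3: "vge v (D1 * (h2 b - h2 a)) (2*m)"
      using lin_vge[OF a g1, of b m] goodD5[OF g2 a b m] c unfolding D1_def
      by (intro vge_mult') auto
    show "vge v (h1 b * h2 b - h1 a * h2 a - (\<Sum>i\<in>UNIV. (d1 i a * h2 a + h1 a * d2 i a) * (b i - a i))) (2 * m)"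
      unfolding s e using 1 2 3 vge_add by blast
  next
    fix a b :: "'n \<Rightarrow> 'a" and m :: int and i
    assume a: "a \<in> On v" and b: "b \<in> On v" and m: "0 \<le> m" and c: "\<forall>i. vge v (b i - a i) m"
    have e: "d1 i b * h2 b + h1 b * d2 i b - (d1 i a * h2 a + h1 a * d2 i a) =
       ((d1 i b - d1 i a) * h2 b + d1 i a * (h2 b - h2 a)) + ((h1 b - h1 a) * d2 i b + h1 a * (d2 i b - d2 i a))"
      by (simp add: algebra_simps)
    have 1: "vge v ((d1 i b - d1 i a) * h2 b) m"
      using goodD4[OF g1 a b m] c goodD1[OF g2 b] by (intro vge_mult') auto
    have 2: "vge v (d1 i a * (h2 b - h2 a)) m"
      using goodD5[OF g2 a b m] c goodD2[OF g1 a] by (intro vge_mult') auto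
    have 3: "vge v ((h1 b - h1 a) * d2 i b) m"
      using goodD5[OF g1 a b m] c goodD2[OF g2 b] by (intro vge_mult') auto
    have 4: "vge v (h1 a * (d2 i b - d2 i a)) m"
      using goodD4[OF g2 a b m] c goodD1[OF g1 a] by (intro vge_mult') auto
    show "vge v (d1 i b * h2 b + h1 b * d2 i b - (d1 i a * h2 a + h1 a * d2 i a)) m"
      unfolding e using 1 2 3 4 vge_add by blast
  qed
qed

lemma good_sum: "(\<And>\<alpha>. \<alpha> \<in> S \<Longrightarrow> good v (h \<alpha>) (d \<alpha>)) \<Longrightarrow>
   good v (\<lambda>x. \<Sum>\<alpha>\<in>S. h \<alpha> x) (\<lambda>i x. \<Sum>\<alpha>\<in>S. d \<alpha> i x)"
proof (induction S rule: infinite_finite_induct)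
  case (infinite A)
  then show ?case using good_const[of 0] by simp
next
  case empty
  then show ?case using good_const[of 0] by simp
next
  case (insert x F)
  then show ?case using good_add[of "h x" "d x" "\<lambda>y. \<Sum>\<alpha>\<in>F. h \<alpha> y" "\<lambda>i y. \<Sum>\<alpha>\<in>F. d \<alpha> i y"]
    by simp
qed

lemma good_pow: "good v (\<lambda>x::'n::finite \<Rightarrow> 'a. x j ^ n) (\<lambda>i x. if i = j then of_nat n * x j ^ (n - 1) else 0)"
proof (induction n)
  case 0
  show ?case using good_const[of 1] vge_1 by (auto intro: good_cong)
next
  case (Suc n)
  have H: "good v (\<lambda>x. x j * x j ^ n)
     (\<lambda>i x. (if i = j then 1 else 0) * x j ^ n + x j * (if i = j then of_nat n * x j ^ (n - 1) else 0))"
    by (rule good_mult[OF good_coord Suc])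
  have eqh: "(\<lambda>x::'n \<Rightarrow> 'a. x j ^ Suc n) = (\<lambda>x. x j * x j ^ n)" by simp
  show ?case unfolding eqh
  proof (rule good_cong[OF H])
    fix i and x :: "'n \<Rightarrow> 'a"
    show "(if i = j then of_nat (Suc n) * x j ^ (Suc n - 1) else 0) =
         (if i = j then 1 else 0) * x j ^ n + x j * (if i = j then of_nat n * x j ^ (n - 1) else 0)"
      by (cases n) (auto simp: algebra_simps)
  qed
qed

lemma good_mon_set: "good v (\<lambda>x::'n::finite \<Rightarrow> 'a. \<Prod>j\<in>S. x j ^ \<beta> j)
   (\<lambda>i x. if i \<in> S then of_nat (\<beta> i) * (\<Prod>j\<in>S. x j ^ (\<beta>(i := \<beta> i - 1)) j) else 0)"
proof (induction S rule: finite_induct[OF finite])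
  case 1
  show ?case using good_const[of 1] vge_1 by (auto intro: good_cong)
next
  case (2 j0 S)
  have H: "good v (\<lambda>x. x j0 ^ \<beta> j0 * (\<Prod>j\<in>S. x j ^ \<beta> j))
     (\<lambda>i x. (if i = j0 then of_nat (\<beta> j0) * x j0 ^ (\<beta> j0 - 1) else 0) * (\<Prod>j\<in>S. x j ^ \<beta> j) +
        x j0 ^ \<beta> j0 * (if i \<in> S then of_nat (\<beta> i) * (\<Prod>j\<in>S. x j ^ (\<beta>(i := \<beta> i - 1)) j) else 0))"
    by (rule good_mult[OF good_pow 2(3)])
  have eqh: "(\<lambda>x::'n \<Rightarrow> 'a. \<Prod>j\<in>insert j0 S. x j ^ \<beta> j) = (\<lambda>x. x j0 ^ \<beta> j0 * (\<Prod>j\<in>S. x j ^ \<beta> j))"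
    using 2(1,2) by simp
  show ?case unfolding eqh
  proof (rule good_cong[OF H])
    fix i and x :: "'n \<Rightarrow> 'a"
    have p1: "(\<Prod>j\<in>S. x j ^ (\<beta>(j0 := \<beta> j0 - 1)) j) = (\<Prod>j\<in>S. x j ^ \<beta> j)"
      using 2(2) by (intro prod.cong) auto
    have p2: "i \<in> S \<Longrightarrow> (\<Prod>j\<in>insert j0 S. x j ^ (\<beta>(i := \<beta> i - 1)) j) = x j0 ^ \<beta> j0 * (\<Prod>j\<in>S. x j ^ (\<beta>(i := \<beta> i - 1)) j)"
      using 2(1,2) by (subst prod.insert) auto
    show "(if i \<in> insert j0 S then of_nat (\<beta> i) * (\<Prod>j\<in>insert j0 S. x j ^ (\<beta>(i := \<beta> i - 1)) j) else 0) =
      (if i = j0 then of_nat (\<beta> j0) * x j0 ^ (\<beta> j0 - 1) else 0) * (\<Prod>j\<in>S. x j ^ \<beta> j) +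
        x j0 ^ \<beta> j0 * (if i \<in> S then of_nat (\<beta> i) * (\<Prod>j\<in>S. x j ^ (\<beta>(i := \<beta> i - 1)) j) else 0)"
    proof (cases "i = j0")
      case True
      then show ?thesis using 2(1,2) p1 by (simp add: prod.insert)
    next
      case False
      then show ?thesis using p2 by auto
    qed
  qed
qed

lemma good_mon: "good v (\<lambda>x::'n::finite \<Rightarrow> 'a. \<Prod>j\<in>UNIV. x j ^ \<beta> j)
   (\<lambda>i x. of_nat (\<beta> i) * (\<Prod>j\<in>UNIV. x j ^ (\<beta>(i := \<beta> i - 1)) j))"
  using good_mon_set[where S=UNIV and \<beta>=\<beta>] by simp

end


context padic
begin

lemma pd_expand:
  fixes c :: "('n::finite \<Rightarrow> nat) \<Rightarrow> 'a"
  assumes fin: "finite {\<alpha>. c \<alpha> \<noteq> 0}"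
  shows "mpoly_eval (mpoly_pd i c) x =
    (\<Sum>\<beta>\<in>{\<alpha>. c \<alpha> \<noteq> 0}. c \<beta> * (of_nat (\<beta> i) * (\<Prod>j\<in>UNIV. x j ^ (\<beta>(i := \<beta> i - 1)) j)))"
proof -
  define g where "g = (\<lambda>\<alpha>::'n \<Rightarrow> nat. \<alpha>(i := \<alpha> i + 1))"
  define A where "A = {\<alpha>. mpoly_pd i c \<alpha> \<noteq> 0}"
  define B where "B = {\<beta>. c \<beta> \<noteq> 0 \<and> \<beta> i > 0}"
  define F where "F = (\<lambda>\<beta>. c \<beta> * (of_nat (\<beta> i) * (\<Prod>j\<in>UNIV. x j ^ (\<beta>(i := \<beta> i - 1)) j)))"
  have inj: "inj_on g A" unfolding g_def inj_on_def
    by (metis fun_upd_idem_iff fun_upd_upd add_right_cancel fun_upd_same)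
  have A: "A = {\<alpha>. c (g \<alpha>) \<noteq> 0}" unfolding A_def g_def mpoly_pd_def
    by (simp del: of_nat_Suc add: of_nat_eq_0_iff)
  have gA: "g ` A = B"
  proof
    show "g ` A \<subseteq> B" unfolding A B_def g_def by auto
    show "B \<subseteq> g ` A"
    proof
      fix \<beta> assume b: "\<beta> \<in> B"
      then have "g (\<beta>(i := \<beta> i - 1)) = \<beta>" unfolding B_def g_def by auto
      moreover have "\<beta>(i := \<beta> i - 1) \<in> A" unfolding A using b \<open>g (\<beta>(i := \<beta> i - 1)) = \<beta>\<close>
        unfolding B_def by simp
      ultimately show "\<beta> \<in> g ` A" by force
    qed
  qed
  have "mpoly_eval (mpoly_pd i c) x = (\<Sum>\<alpha>\<in>A. F (g \<alpha>))"
    unfolding mpoly_eval_def A_def[symmetric]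
  proof (intro sum.cong refl)
    fix \<alpha> assume "\<alpha> \<in> A"
    have "(g \<alpha>)(i := g \<alpha> i - 1) = \<alpha>" unfolding g_def by auto
    then show "mpoly_pd i c \<alpha> * (\<Prod>ia\<in>UNIV. x ia ^ \<alpha> ia) = F (g \<alpha>)"
      unfolding F_def mpoly_pd_def by (simp add: g_def algebra_simps)
  qed
  also have "\<dots> = (\<Sum>\<beta>\<in>B. F \<beta>)" using sum.reindex[OF inj, of F] gA by simp
  also have "\<dots> = (\<Sum>\<beta>\<in>{\<alpha>. c \<alpha> \<noteq> 0}. F \<beta>)"
    using fin by (intro sum.mono_neutral_left) (auto simp: B_def F_def)
  finally show ?thesis unfolding F_def .
qed

lemma good_mpoly:
  fixes c :: "('n::finite \<Rightarrow> nat) \<Rightarrow> 'a"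
  assumes c: "is_poly_over (ring_int v) c"
  shows "good v (mpoly_eval c) (\<lambda>i. mpoly_eval (mpoly_pd i c))"
proof -
  have fin: "finite {\<alpha>. c \<alpha> \<noteq> 0}" and cO: "\<And>\<alpha>. vge v (c \<alpha>) 0"
    using c by (auto simp: is_poly_over_def ring_int_def)
  have H: "good v (\<lambda>x. \<Sum>\<beta>\<in>{\<alpha>. c \<alpha> \<noteq> 0}. c \<beta> * (\<Prod>j\<in>UNIV. x j ^ \<beta> j))
     (\<lambda>i x. \<Sum>\<beta>\<in>{\<alpha>. c \<alpha> \<noteq> 0}. 0 * (\<Prod>j\<in>UNIV. x j ^ \<beta> j) +
         c \<beta> * (of_nat (\<beta> i) * (\<Prod>j\<in>UNIV. x j ^ (\<beta>(i := \<beta> i - 1)) j)))"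
    by (intro good_sum good_mult good_const cO good_mon)
  have eqh: "mpoly_eval c = (\<lambda>x. \<Sum>\<beta>\<in>{\<alpha>. c \<alpha> \<noteq> 0}. c \<beta> * (\<Prod>j\<in>UNIV. x j ^ \<beta> j))"
    by (simp add: mpoly_eval_def fun_eq_iff)
  show ?thesis unfolding eqh
    by (rule good_cong[OF H]) (simp add: pd_expand[OF fin])
qed

end


context padic
begin

lemma vball_On: "a \<in> On v \<Longrightarrow> k \<ge> 0 \<Longrightarrow> vball v a k \<subseteq> On v"
proof
  fix x assume a: "a \<in> On v" and k: "k \<ge> 0" and x: "x \<in> vball v a k"
  have "vge v (x i) 0" for i
  proof -
    have "x i = (x i - a i) + a i" by simp
    moreover have "vge v (x i - a i) 0" using x k vge_mono by (auto simp: vball_def)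
    ultimately show ?thesis using On_vge[OF a, of i] vge_add by metis
  qed
  then show "x \<in> On v" by (simp add: On_def ring_int_def)
qed

lemma vball_mono: "k \<le> l \<Longrightarrow> vball v a l \<subseteq> vball v a k"
  by (auto simp: vball_def intro: vge_mono)

lemma vball_center: "a \<in> vball v a k"
  by (simp add: vball_def)

lemma vball_eq: "b \<in> vball v a k \<Longrightarrow> vball v b k = vball v a k"
proof -
  assume b: "b \<in> vball v a k"
  have 1: "vge v (b i - a i) k" for i using b by (simp add: vball_def)
  show ?thesis
  proof (intro set_eqI iffI)
    fix x assume "x \<in> vball v b k"
    then have "vge v (x i - b i) k" for i by (simp add: vball_def)
    then have "vge v ((x i - b i) + (b i - a i)) k" for i using 1 vge_add by blast
    then show "x \<in> vball v a k" by (simp add: vball_def)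
  next
    fix x assume "x \<in> vball v a k"
    then have "vge v (x i - a i) k" for i by (simp add: vball_def)
    then have "vge v ((x i - a i) - (b i - a i)) k" for i using 1 vge_diff by blast
    then show "x \<in> vball v b k" by (simp add: vball_def)
  qed
qed

lemma vball_disj: "vball v a k \<inter> vball v b k \<noteq> {} \<Longrightarrow> vball v a k = vball v b k"
  using vball_eq by blast

lemma On_eq: "On v = vball v (\<lambda>_. 0) 0"
  by (simp add: On_def vball_def ring_int_def)

lemma zero_On: "(\<lambda>_. 0) \<in> On v"
  by (simp add: On_def ring_int_def)

end

locale setting = padic v \<pi> q for v :: "'a::field_char_0 \<Rightarrow> int" and \<pi> q +
  fixes M :: "('n::finite \<Rightarrow> 'a) measure" and D :: "('n \<Rightarrow> 'a) set"
  assumes haar: "is_haar_On v q M" and Dp: "residue_preimage v D"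
begin

lemma spaceM: "space M = On v"
  using haar by (simp add: is_haar_On_def)

lemma ball_sets: "a \<in> On v \<Longrightarrow> k \<ge> 0 \<Longrightarrow> vball v a k \<in> sets M"
  using haar unfolding is_haar_On_def by (auto intro: sigma_sets.Basic)

lemma ball_emeasure: "a \<in> On v \<Longrightarrow> k \<ge> 0 \<Longrightarrow>
    emeasure M (vball v a k) = ennreal (real q powr (- real_of_int (k * int CARD('n))))"
  using haar unfolding is_haar_On_def by auto

lemma fin_M: "finite_measure M"
proof
  show "emeasure M (space M) \<noteq> \<infinity>"
    unfolding spaceM On_eq using ball_emeasure[OF zero_On, of 0] zero_On On_eq by simp
qed

interpretation M: finite_measure M by (rule fin_M)

lemma ball_measure: "a \<in> On v \<Longrightarrow> k \<ge> 0 \<Longrightarrow>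
    measure M (vball v a k) = real q powr (- real_of_int (k * int CARD('n)))"
  unfolding measure_def by (simp add: ball_emeasure)

lemma ball_measure_pos: "a \<in> On v \<Longrightarrow> 0 \<le> k \<Longrightarrow> k \<le> K \<Longrightarrow>
    measure M (vball v a k) \<ge> real q powr (- real_of_int (K * int CARD('n)))"
proof -
  assume a: "a \<in> On v" and k: "0 \<le> k" "k \<le> K"
  have "- real_of_int (K * int CARD('n)) \<le> - real_of_int (k * int CARD('n))"
    using k by (simp add: mult_right_mono)
  moreover have "1 \<le> real q" using q_ge2 by simp
  ultimately have "real q powr (- real_of_int (K * int CARD('n))) \<le> real q powr (- real_of_int (k * int CARD('n)))"
    by (rule powr_mono)
  then show ?thesis using ball_measure[OF a k(1)] by simp
qed

lemma disjoint_finite: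
  assumes F: "F \<subseteq> sets M" and disj: "\<And>A B. A \<in> F \<Longrightarrow> B \<in> F \<Longrightarrow> A \<noteq> B \<Longrightarrow> A \<inter> B = {}"
    and eps: "\<And>A. A \<in> F \<Longrightarrow> measure M A \<ge> e" and e: "e > 0"
  shows "finite F"
proof (rule ccontr)
  assume inf: "infinite F"
  obtain N :: nat where N: "real N * e > measure M (space M)"
    using reals_Archimedean3[OF e] by blast
  obtain G where G: "finite G" "card G = N" "G \<subseteq> F" using infinite_arbitrarily_large[OF inf] by blast
  have dj: "disjoint_family_on (\<lambda>A. A) G"
    unfolding disjoint_family_on_def using G(3) disj by blast
  have "measure M (\<Union>A\<in>G. A) = (\<Sum>A\<in>G. measure M A)"
    using G F dj by (intro M.finite_measure_finite_Union) auto
  then have "measure M (\<Union>G) = (\<Sum>A\<in>G. measure M A)" by simp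
  also have "\<dots> \<ge> (\<Sum>A\<in>G. e)" using G eps by (intro sum_mono) auto
  moreover have "(\<Sum>A\<in>G. e) = real N * e" using G by simp
  ultimately have 1: "measure M (\<Union>G) \<ge> real N * e" by linarith
  have "\<Union>G \<subseteq> space M" using G F sets.sets_into_space by blast
  then have 2: "measure M (\<Union>G) \<le> measure M (space M)"
    by (intro M.finite_measure_mono) auto
  from 1 2 N show False by linarith
qed

lemma D_On: "D \<subseteq> On v" and D_ball: "a \<in> D \<Longrightarrow> vball v a 1 \<subseteq> D"
  using Dp by (auto simp: residue_preimage_def)

definition E :: "(('n \<Rightarrow> 'a) \<Rightarrow> 'a) \<Rightarrow> int \<Rightarrow> ('n \<Rightarrow> 'a) set" where
  "E h k = {x \<in> D. vge v (h x) k}"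

lemma E_sets:
  assumes g: "good v h dh"
  shows "E h k \<in> sets M"
proof -
  define k' where "k' = max k 1"
  define F where "F = (\<lambda>x. vball v x k') ` E h k"
  have k': "k' \<ge> 1" "k' \<ge> k" unfolding k'_def by auto
  have eq: "E h k = \<Union>F"
  proof
    show "E h k \<subseteq> \<Union>F" unfolding F_def using vball_center by blast
    show "\<Union>F \<subseteq> E h k"
    proof
      fix y assume "y \<in> \<Union>F"
      then obtain x where x: "x \<in> E h k" and y: "y \<in> vball v x k'" unfolding F_def by auto
      have xD: "x \<in> D" and hx: "vge v (h x) k" using x by (auto simp: E_def)
      have yD: "y \<in> D" using y vball_mono[of 1 k' x] k' D_ball[OF xD] by blast
      have "vge v (h y - h x) k'"
        using goodD5[OF g, of x y k'] xD yD D_On k' y by (auto simp: vball_def vge_diff_sym)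
      then have "vge v ((h y - h x) + h x) k" using hx k' vge_mono vge_add by blast
      then show "y \<in> E h k" using yD by (simp add: E_def)
    qed
  qed
  have Fs: "F \<subseteq> sets M" unfolding F_def E_def using D_On k' by (auto intro!: ball_sets)
  have "finite F"
  proof (rule disjoint_finite[OF Fs])
    show "\<And>A B. A \<in> F \<Longrightarrow> B \<in> F \<Longrightarrow> A \<noteq> B \<Longrightarrow> A \<inter> B = {}"
      unfolding F_def using vball_disj by blast
  next
    fix A assume "A \<in> F"
    then obtain x where "x \<in> D" "A = vball v x k'" unfolding F_def E_def by auto
    then show "measure M A \<ge> real q powr (- real_of_int (k' * int CARD('n)))"
      using ball_measure[of x k'] D_On k' by auto
  next
    show "real q powr (- real_of_int (k' * int CARD('n))) > 0" using q_ge2 by simp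
  qed
  then show ?thesis unfolding eq using Fs by (rule sets.finite_Union)
qed

lemma E_sub: "k \<le> l \<Longrightarrow> E h l \<subseteq> E h k"
  unfolding E_def using vge_mono by blast

end


context padic
begin

lemma vge_inv_unit: "v u = 0 \<Longrightarrow> u \<noteq> 0 \<Longrightarrow> vge v (inverse u) 0"
  by (simp add: vge_def vinv)

lemma count_lin:
  fixes w :: "'n::finite \<Rightarrow> 'a" and cz :: 'a and R :: "'a set"
  assumes Rf: "finite R" and Rc: "card R = q" and RO: "\<And>r. r \<in> R \<Longrightarrow> vge v r 0"
    and rep: "\<And>y. vge v y 0 \<Longrightarrow> \<exists>r\<in>R. vge v (y - r) 1"
    and uniq: "\<And>r r'. r \<in> R \<Longrightarrow> r' \<in> R \<Longrightarrow> vge v (r - r') 1 \<Longrightarrow> r = r'"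
    and w: "\<And>i. vge v (w i) 0" and u: "v (w iz) = 0" "w iz \<noteq> 0" and cz: "vge v cz 0"
  shows "card {t. (\<forall>i. t i \<in> R) \<and> vge v (cz + (\<Sum>i\<in>UNIV. w i * t i)) 1} = q ^ (CARD('n) - 1)"
proof -
  define A where "A = (UNIV - {iz} :: 'n set)"
  define G where "G = {t. (\<forall>i. t i \<in> R) \<and> vge v (cz + (\<Sum>i\<in>UNIV. w i * t i)) 1}"
  define C where "C = (\<lambda>t. cz + (\<Sum>i\<in>A. w i * t i))"
  have split: "cz + (\<Sum>i\<in>UNIV. w i * t i) = C t + w iz * t iz" for t
    unfolding C_def A_def by (simp add: sum.remove[of UNIV iz])
  have Ccong: "(\<And>i. i \<in> A \<Longrightarrow> t i = t' i) \<Longrightarrow> C t = C t'" for t t'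
    unfolding C_def by (intro arg_cong[where f="\<lambda>x. cz + x"] sum.cong) auto
  have CO: "(\<And>i. i \<in> A \<Longrightarrow> t i \<in> R) \<Longrightarrow> vge v (C t) 0" for t
    unfolding C_def using cz w RO
    by (intro vge_add vge_sum) (auto intro: vge_mult'[of _ 0 _ 0])
  have bij: "bij_betw (\<lambda>t. restrict t A) G (Pi\<^sub>E A (\<lambda>_. R))"
    unfolding bij_betw_def
  proof (intro conjI)
    show "inj_on (\<lambda>t. restrict t A) G"
    proof (rule inj_onI)
      fix t t' assume t: "t \<in> G" and t': "t' \<in> G" and eq: "restrict t A = restrict t' A"
      have agree: "i \<in> A \<Longrightarrow> t i = t' i" for i using eq by (metis restrict_apply')
      have "vge v (C t + w iz * t iz) 1" using t unfolding G_def split by simp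
      moreover have "vge v (C t + w iz * t' iz) 1" using t' Ccong[OF agree] unfolding G_def split by simp
      ultimately have "vge v ((C t + w iz * t iz) - (C t + w iz * t' iz)) 1" by (rule vge_diff)
      then have "vge v (w iz * (t iz - t' iz)) 1" by (simp add: algebra_simps)
      then have "vge v (t iz - t' iz) 1" using vge_unit[OF u] by simp
      then have "t iz = t' iz" using uniq t t' unfolding G_def by blast
      then show "t = t'" using agree unfolding A_def by (metis DiffI UNIV_I ext singletonD)
    qed
  next
    show "(\<lambda>t. restrict t A) ` G = Pi\<^sub>E A (\<lambda>_. R)"
    proof
      show "(\<lambda>t. restrict t A) ` G \<subseteq> Pi\<^sub>E A (\<lambda>_. R)" unfolding G_def by auto
      show "Pi\<^sub>E A (\<lambda>_. R) \<subseteq> (\<lambda>t. restrict t A) ` G"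
      proof
        fix s assume s: "s \<in> Pi\<^sub>E A (\<lambda>_. R)"
        have sR: "i \<in> A \<Longrightarrow> s i \<in> R" for i using s by auto
        define y where "y = - C s * inverse (w iz)"
        have yO: "vge v y 0" unfolding y_def
          using vge_mult[OF iffD2[OF vge_neg CO[OF sR]] vge_inv_unit[OF u]] by simp
        obtain r where r: "r \<in> R" "vge v (y - r) 1" using rep[OF yO] by blast
        define t where "t = s(iz := r)"
        have Ct: "C t = C s" by (rule Ccong) (auto simp: t_def A_def)
        have "C t + w iz * t iz = C s + w iz * r" using Ct by (simp add: t_def)
        also have "\<dots> = w iz * (r - y)" using u(2) by (simp add: y_def field_simps)
        finally have "C t + w iz * t iz = w iz * (r - y)" .
        moreover have "vge v (w iz * (r - y)) 1" using vge_unit[OF u] r(2) vge_diff_sym by simp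
        ultimately have "vge v (cz + (\<Sum>i\<in>UNIV. w i * t i)) 1" unfolding split by simp
        moreover have "\<forall>i. t i \<in> R" using sR r(1) unfolding t_def A_def by auto
        ultimately have "t \<in> G" unfolding G_def by simp
        moreover have "restrict t A = s"
        proof
          fix i show "restrict t A i = s i"
            using s PiE_arb[OF s] unfolding t_def A_def by (cases "i = iz") auto
        qed
        ultimately show "s \<in> (\<lambda>t. restrict t A) ` G" by force
      qed
    qed
  qed
  have "card G = card (Pi\<^sub>E A (\<lambda>_. R))" using bij_betw_same_card[OF bij] .
  also have "\<dots> = q ^ card A" using card_PiE[of A "\<lambda>_. R"] Rc by simp
  also have "card A = CARD('n) - 1" unfolding A_def by (simp add: card_Diff_singleton)
  finally show ?thesis unfolding G_def .
qed

end


context setting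
begin

interpretation M: finite_measure M by (rule fin_M)

lemma hensel_step:
  assumes g: "good v h dh" and aD: "a \<in> D" and l0: "0 \<le> l"
    and dl: "\<And>i. vge v (dh i a) l" and i0: "dh i0 a \<noteq> 0" "v (dh i0 a) = l"
    and ha: "vge v (h a) k" and kl: "2*l + 1 \<le> k"
  shows "measure M (vball v a (k - l) \<inter> E h (k+1)) = measure M (vball v a (k - l)) / real q"
proof -
  define m where "m = k - l"
  have m1: "m \<ge> 1" "m \<ge> l + 1" "2 * m \<ge> k + 1" "k = m + l" using kl l0 unfolding m_def by auto
  obtain R where R: "finite R" "card R = q" "R \<subseteq> ring_int v"
    "\<forall>x\<in>ring_int v. \<exists>!r. r \<in> R \<and> vge v (x - r) 1"
    using residues by blast
  have RO: "\<And>r. r \<in> R \<Longrightarrow> vge v r 0" using R(3) by (auto simp: ring_int_def)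
  have rep: "\<And>y. vge v y 0 \<Longrightarrow> \<exists>r\<in>R. vge v (y - r) 1" using R(4) by (auto simp: ring_int_def)
  have uniq: "\<And>r r'. r \<in> R \<Longrightarrow> r' \<in> R \<Longrightarrow> vge v (r - r') 1 \<Longrightarrow> r = r'"
  proof -
    fix r r' assume r: "r \<in> R" "r' \<in> R" "vge v (r - r') 1"
    have "r \<in> ring_int v" using r R(3) by auto
    then have "\<exists>!x. x \<in> R \<and> vge v (r - x) 1" using R(4) by blast
    moreover have "vge v (r - r) 1" by simp
    ultimately show "r = r'" using r by blast
  qed
  define T where "T = {t::'n \<Rightarrow> 'a. \<forall>i. t i \<in> R}"
  define c where "c = (\<lambda>t i. a i + \<pi> powi m * t i)"
  define sub where "sub = (\<lambda>t. vball v (c t) (m + 1))"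
  define L where "L = (\<lambda>t. h a / \<pi> powi k + (\<Sum>i\<in>UNIV. (dh i a / \<pi> powi l) * t i))"
  define G where "G = {t \<in> T. vge v (L t) 1}"
  have aOn: "a \<in> On v" using aD D_On by auto
  have tO: "t \<in> T \<Longrightarrow> vge v (t i) 0" for t i using RO unfolding T_def by auto
  have cOn: "t \<in> T \<Longrightarrow> c t \<in> On v" for t
    unfolding c_def On_def ring_int_def using On_vge[OF aOn] tO m1
    by (auto intro!: vge_add vge_mult'[of _ m _ 0] vge_powi)
  have sub_ball: "t \<in> T \<Longrightarrow> sub t \<subseteq> vball v a m" for t
  proof
    fix x assume t: "t \<in> T" and x: "x \<in> sub t"
    have "vge v (x i - a i) m" for i
    proof -
      have "vge v (x i - c t i) (m + 1)" using x unfolding sub_def vball_def by simp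
      then have "vge v (x i - c t i) m" using vge_mono by simp
      moreover have "vge v (\<pi> powi m * t i) m" using vge_pimul tO[OF t] by simp
      ultimately have "vge v ((x i - c t i) + \<pi> powi m * t i) m" by (rule vge_add)
      then show ?thesis by (simp add: c_def)
    qed
    then show "x \<in> vball v a m" by (simp add: vball_def)
  qed
  have ball_D: "vball v a m \<subseteq> D" using vball_mono[of 1 m a] m1 D_ball[OF aD] by blast
  have key: "t \<in> T \<Longrightarrow> x \<in> sub t \<Longrightarrow> vge v (h x - \<pi> powi k * L t) (k + 1)" for t x
  proof -
    assume t: "t \<in> T" and x: "x \<in> sub t"
    have xOn: "x \<in> On v" using x sub_ball[OF t] ball_D D_On by blast
    have xa: "vge v (x i - a i) m" for i using x sub_ball[OF t] by (auto simp: vball_def)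
    have xc: "vge v (x i - a i - \<pi> powi m * t i) (m + 1)" for i
      using x unfolding sub_def vball_def c_def by (simp add: algebra_simps)
    have tay: "vge v (h x - h a - (\<Sum>i\<in>UNIV. dh i a * (x i - a i))) (k + 1)"
      using goodD3[OF g aOn xOn, of m] xa m1 vge_mono by fastforce
    have pk: "\<pi> powi k = \<pi> powi m * \<pi> powi l" using m1(4) pi_nz by (simp add: power_int_add)
    have eqL: "\<pi> powi k * L t = h a + (\<Sum>i\<in>UNIV. dh i a * (\<pi> powi m * t i))"
    proof -
      have "\<pi> powi k * L t = \<pi> powi k * (h a / \<pi> powi k) + (\<Sum>i\<in>UNIV. \<pi> powi k * ((dh i a / \<pi> powi l) * t i))"
        unfolding L_def by (simp add: distrib_left sum_distrib_left)
      also have "\<dots> = h a + (\<Sum>i\<in>UNIV. dh i a * (\<pi> powi m * t i))"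
        using powi_nz[of k] powi_nz[of l] pi_nz unfolding pk by (simp add: mult_ac)
      finally show ?thesis .
    qed
    have eq: "h x - \<pi> powi k * L t = (h x - h a - (\<Sum>i\<in>UNIV. dh i a * (x i - a i)))
        + (\<Sum>i\<in>UNIV. dh i a * (x i - a i - \<pi> powi m * t i))"
      unfolding eqL by (simp add: algebra_simps sum_subtractf sum.distrib)
    have 2: "vge v (\<Sum>i\<in>UNIV. dh i a * (x i - a i - \<pi> powi m * t i)) (k + 1)"
      using dl xc m1 by (intro vge_sum) (auto intro: vge_mult'[of _ l _ "m+1"])
    show ?thesis unfolding eq using tay 2 by (rule vge_add)
  qed
  have memE: "t \<in> T \<Longrightarrow> x \<in> sub t \<Longrightarrow> (x \<in> E h (k+1) \<longleftrightarrow> t \<in> G)" for t x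
  proof -
    assume t: "t \<in> T" and x: "x \<in> sub t"
    have xD: "x \<in> D" using x sub_ball[OF t] ball_D by blast
    have "vge v (h x) (k+1) \<longleftrightarrow> vge v (\<pi> powi k * L t) (k+1)"
    proof
      assume "vge v (h x) (k+1)"
      from vge_diff[OF this key[OF t x]] show "vge v (\<pi> powi k * L t) (k+1)" by simp
    next
      assume "vge v (\<pi> powi k * L t) (k+1)"
      from vge_add[OF key[OF t x] this] show "vge v (h x) (k+1)" by simp
    qed
    also have "\<dots> \<longleftrightarrow> vge v (L t) 1" by (simp add: vge_pimul)
    finally show ?thesis using xD t unfolding E_def G_def by auto
  qed
  have cover: "x \<in> vball v a m \<Longrightarrow> \<exists>t\<in>T. x \<in> sub t" for x
  proof -
    assume x: "x \<in> vball v a m"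
    have "\<forall>i. \<exists>r. r \<in> R \<and> vge v ((x i - a i) / \<pi> powi m - r) 1"
    proof
      fix i
      have "vge v ((x i - a i) / \<pi> powi m) (m - m)"
        using x by (intro vge_div_powi) (simp add: vball_def)
      then show "\<exists>r. r \<in> R \<and> vge v ((x i - a i) / \<pi> powi m - r) 1" using rep by auto
    qed
    then obtain t where t: "\<And>i. t i \<in> R \<and> vge v ((x i - a i) / \<pi> powi m - t i) 1" by metis
    have "vge v (x i - c t i) (m + 1)" for i
    proof -
      have "x i - c t i = \<pi> powi m * ((x i - a i) / \<pi> powi m - t i)"
        using powi_nz[of m] unfolding c_def by (simp add: field_simps)
      then show ?thesis using t[of i] vge_pimul by simp
    qed
    then have "x \<in> sub t" unfolding sub_def vball_def by simp
    moreover have "t \<in> T" using t unfolding T_def by auto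
    ultimately show ?thesis by blast
  qed
  have disj: "t \<in> T \<Longrightarrow> t' \<in> T \<Longrightarrow> t \<noteq> t' \<Longrightarrow> sub t \<inter> sub t' = {}" for t t'
  proof (rule ccontr)
    assume t: "t \<in> T" "t' \<in> T" "t \<noteq> t'" and ne: "sub t \<inter> sub t' \<noteq> {}"
    then obtain x where x: "x \<in> sub t" "x \<in> sub t'" by blast
    have "t i = t' i" for i
    proof -
      have "vge v ((x i - c t i) - (x i - c t' i)) (m + 1)"
        using x unfolding sub_def vball_def by (rule_tac vge_diff) auto
      moreover have "(x i - c t i) - (x i - c t' i) = \<pi> powi m * (t' i - t i)"
        unfolding c_def by (simp add: algebra_simps)
      ultimately have "vge v (t' i - t i) 1" using vge_pimul by simp
      then show ?thesis using uniq[of "t' i" "t i"] t(1,2) unfolding T_def by auto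
    qed
    then show False using t(3) by (simp add: fun_eq_iff)
  qed
  have eqset: "vball v a m \<inter> E h (k+1) = \<Union>(sub ` G)"
  proof
    show "vball v a m \<inter> E h (k + 1) \<subseteq> \<Union> (sub ` G)"
    proof
      fix x assume x: "x \<in> vball v a m \<inter> E h (k + 1)"
      then obtain t where "t \<in> T" "x \<in> sub t" using cover by blast
      then show "x \<in> \<Union> (sub ` G)" using memE x by blast
    qed
    show "\<Union> (sub ` G) \<subseteq> vball v a m \<inter> E h (k + 1)"
    proof
      fix x assume "x \<in> \<Union> (sub ` G)"
      then obtain t where t: "t \<in> G" "x \<in> sub t" by blast
      have tT: "t \<in> T" using t(1) unfolding G_def by simp
      show "x \<in> vball v a m \<inter> E h (k + 1)" using sub_ball[OF tT] t memE[OF tT t(2)] by blast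
    qed
  qed
  have Tfin: "finite T"
  proof -
    have "T = Pi\<^sub>E UNIV (\<lambda>_. R)" unfolding T_def by (auto simp: PiE_def Pi_def extensional_def)
    then show ?thesis using R(1) by (simp add: finite_PiE)
  qed
  have Gfin: "finite G" using Tfin unfolding G_def by simp
  have subm: "t \<in> T \<Longrightarrow> measure M (sub t) = real q powr (- real_of_int ((m + 1) * int CARD('n)))" for t
    unfolding sub_def using cOn m1 by (intro ball_measure) auto
  have "measure M (vball v a m \<inter> E h (k+1)) = (\<Sum>t\<in>G. measure M (sub t))"
    unfolding eqset
  proof (rule M.finite_measure_finite_Union[OF Gfin])
    show "sub ` G \<subseteq> sets M" unfolding sub_def G_def using cOn m1 by (auto intro!: ball_sets)
    show "disjoint_family_on sub G" unfolding disjoint_family_on_def G_def using disj by blast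
  qed
  also have "\<dots> = (\<Sum>t\<in>G. real q powr (- real_of_int ((m + 1) * int CARD('n))))"
    by (rule sum.cong) (auto simp: G_def subm)
  also have "\<dots> = real (card G) * real q powr (- real_of_int ((m + 1) * int CARD('n)))"
    by simp
  also have "card G = q ^ (CARD('n) - 1)"
  proof -
    define w where "w = (\<lambda>i. dh i a / \<pi> powi l)"
    have w: "vge v (w i) 0" for i using vge_div_powi[OF dl[of i], of l] unfolding w_def by simp
    have u: "v (w i0) = 0" "w i0 \<noteq> 0"
      using i0 powi_nz[of l] vmult[OF i0(1), of "inverse (\<pi> powi l)"] vinv[OF powi_nz[of l]] vpowi[of l]
      unfolding w_def by (simp_all add: divide_inverse)
    have c0: "vge v (h a / \<pi> powi k) 0" using vge_div_powi[OF ha, of k] by simp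
    have "G = {t. (\<forall>i. t i \<in> R) \<and> vge v (h a / \<pi> powi k + (\<Sum>i\<in>UNIV. w i * t i)) 1}"
      unfolding G_def T_def L_def w_def by simp
    then show ?thesis using count_lin[where R=R and w=w and iz=i0 and cz="h a / \<pi> powi k", OF R(1,2) RO rep uniq w u c0] by simp
  qed
  also have "real (q ^ (CARD('n) - 1)) * real q powr (- real_of_int ((m + 1) * int CARD('n)))
      = real q powr (- real_of_int (m * int CARD('n))) / real q"
  proof -
    have q0: "real q > 0" using q_ge2 by simp
    have n1: "CARD('n) \<ge> 1" by (simp add: Suc_leI)
    have "real (q ^ (CARD('n) - 1)) = real q powr (real CARD('n) - 1)"
      using q0 n1 by (simp add: powr_realpow[symmetric] of_nat_diff)
    then have "real (q ^ (CARD('n) - 1)) * real q powr (- real_of_int ((m + 1) * int CARD('n)))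
       = real q powr (real CARD('n) - 1) * real q powr (- real_of_int ((m + 1) * int CARD('n)))"
      by (simp only:)
    also have "\<dots> = real q powr ((real CARD('n) - 1) + (- real_of_int ((m + 1) * int CARD('n))))"
      by (rule powr_add[symmetric])
    also have "(real CARD('n) - 1) + (- real_of_int ((m + 1) * int CARD('n))) = - real_of_int (m * int CARD('n)) - 1"
      by (simp add: algebra_simps)
    also have "real q powr (- real_of_int (m * int CARD('n)) - 1) = real q powr (- real_of_int (m * int CARD('n))) / real q"
      using q0 by (simp add: powr_diff)
    finally show ?thesis .
  qed
  also have "\<dots> = measure M (vball v a m) / real q" using ball_measure[OF aOn] m1 by simp
  finally show ?thesis unfolding m_def .
qed

end


context padic
begin

lemma ell_unique:
  assumes "\<forall>i. vge v (d i) l1" "\<exists>i. d i \<noteq> 0 \<and> v (d i) = l1"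
    and "\<forall>i. vge v (d i) l2" "\<exists>i. d i \<noteq> 0 \<and> v (d i) = l2"
  shows "l1 = l2"
proof -
  obtain i where i: "d i \<noteq> 0" "v (d i) = l1" using assms(2) by blast
  obtain j where j: "d j \<noteq> 0" "v (d j) = l2" using assms(4) by blast
  have "l2 \<le> l1" using assms(3) i by (auto simp: vge_def)
  moreover have "l1 \<le> l2" using assms(1) j by (auto simp: vge_def)
  ultimately show ?thesis by simp
qed

end

context setting
begin

interpretation M: finite_measure M by (rule fin_M)

lemma E_rec:
  assumes g: "good v h dh"
    and lP: "\<And>P. P \<in> D \<Longrightarrow> 0 \<le> ell0 P \<and> (\<forall>i. vge v (dh i P) (ell0 P)) \<and> (\<exists>i. dh i P \<noteq> 0 \<and> v (dh i P) = ell0 P)"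
    and kb: "\<And>P. P \<in> D \<Longrightarrow> 2 * ell0 P + 1 \<le> k"
  shows "measure M (E h (k+1)) = measure M (E h k) / real q"
proof -
  define B where "B = (\<lambda>a. vball v a (k - ell0 a))"
  have BD: "a \<in> D \<Longrightarrow> B a \<subseteq> D" for a
    using vball_mono[of 1 "k - ell0 a" a] kb[of a] lP[of a] D_ball[of a] unfolding B_def by force
  have BE: "a \<in> E h k \<Longrightarrow> B a \<subseteq> E h k" for a
  proof
    fix x assume a: "a \<in> E h k" and x: "x \<in> B a"
    have aD: "a \<in> D" and ha: "vge v (h a) k" using a by (auto simp: E_def)
    have xD: "x \<in> D" using BD[OF aD] x by blast
    have aOn: "a \<in> On v" and xOn: "x \<in> On v" using aD xD D_On by auto
    have l: "0 \<le> ell0 a" "\<And>i. vge v (dh i a) (ell0 a)" "2 * ell0 a + 1 \<le> k" using lP[OF aD] kb[OF aD] by auto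
    have xa: "\<And>i. vge v (x i - a i) (k - ell0 a)" using x by (simp add: B_def vball_def)
    have 1: "vge v (h x - h a - (\<Sum>i\<in>UNIV. dh i a * (x i - a i))) k"
      using goodD3[OF g aOn xOn, of "k - ell0 a"] xa l vge_mono[of _ "2 * (k - ell0 a)" k] by simp
    have 2: "vge v (\<Sum>i\<in>UNIV. dh i a * (x i - a i)) k"
      using l(2) xa by (intro vge_sum) (auto intro: vge_mult'[of _ "ell0 a" _ "k - ell0 a"])
    have "h x = (h x - h a - (\<Sum>i\<in>UNIV. dh i a * (x i - a i))) + (\<Sum>i\<in>UNIV. dh i a * (x i - a i)) + h a"
      by simp
    then have "vge v (h x) k" using vge_add[OF vge_add[OF 1 2] ha] by simp
    then show "x \<in> E h k" using xD by (simp add: E_def)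
  qed
  have Bell: "a \<in> E h k \<Longrightarrow> x \<in> B a \<Longrightarrow> ell0 x = ell0 a" for a x
  proof -
    assume a: "a \<in> E h k" and x: "x \<in> B a"
    have aD: "a \<in> D" using a by (auto simp: E_def)
    have xD: "x \<in> D" using BD[OF aD] x by blast
    have aOn: "a \<in> On v" and xOn: "x \<in> On v" using aD xD D_On by auto
    have l: "0 \<le> ell0 a" "\<forall>i. vge v (dh i a) (ell0 a)" "\<exists>i. dh i a \<noteq> 0 \<and> v (dh i a) = ell0 a"
      "2 * ell0 a + 1 \<le> k" using lP[OF aD] kb[OF aD] by auto
    have xa: "\<And>i. vge v (x i - a i) (k - ell0 a)" using x by (simp add: B_def vball_def)
    have dd: "vge v (dh i x - dh i a) (ell0 a + 1)" for i
      using goodD4[OF g aOn xOn, of "k - ell0 a" i] xa l vge_mono by fastforce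
    have all: "\<forall>i. vge v (dh i x) (ell0 a)"
    proof
      fix i
      have "vge v (dh i x - dh i a) (ell0 a)" using vge_mono[OF dd[of i]] by simp
      then have "vge v ((dh i x - dh i a) + dh i a) (ell0 a)"
        using vge_add l(2) by blast
      then show "vge v (dh i x) (ell0 a)" by simp
    qed
    obtain i0 where i0: "dh i0 a \<noteq> 0" "v (dh i0 a) = ell0 a" using l(3) by blast
    have "dh i0 x \<noteq> 0 \<and> v (dh i0 x) = ell0 a"
    proof (rule ccontr)
      assume "\<not> (dh i0 x \<noteq> 0 \<and> v (dh i0 x) = ell0 a)"
      then have "vge v (dh i0 x) (ell0 a + 1)" using all by (auto simp: vge_def)
      then have "vge v (dh i0 x - (dh i0 x - dh i0 a)) (ell0 a + 1)" using dd vge_diff by blast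
      then show False using i0 by (simp add: vge_def)
    qed
    then have ex: "\<exists>i. dh i x \<noteq> 0 \<and> v (dh i x) = ell0 a" by blast
    from lP[OF xD] have "\<forall>i. vge v (dh i x) (ell0 x)" "\<exists>i. dh i x \<noteq> 0 \<and> v (dh i x) = ell0 x" by auto
    then show "ell0 x = ell0 a" using ell_unique[OF _ _ all ex] by blast
  qed
  have Beq: "a \<in> E h k \<Longrightarrow> x \<in> B a \<Longrightarrow> B x = B a" for a x
    using Bell vball_eq unfolding B_def by metis
  define F where "F = B ` E h k"
  have Ek: "E h k = \<Union>F"
  proof
    show "E h k \<subseteq> \<Union> F" unfolding F_def B_def using vball_center by blast
    show "\<Union> F \<subseteq> E h k" unfolding F_def using BE by blast
  qed
  have Fs: "F \<subseteq> sets M"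
  proof
    fix A assume "A \<in> F"
    then obtain a where a: "a \<in> D" "A = B a" unfolding F_def E_def by blast
    have "0 \<le> ell0 a" "2 * ell0 a + 1 \<le> k" using lP[OF a(1)] kb[OF a(1)] by auto
    then show "A \<in> sets M" unfolding a B_def using a(1) D_On by (intro ball_sets) auto
  qed
  have Fdisj: "A \<in> F \<Longrightarrow> A' \<in> F \<Longrightarrow> A \<noteq> A' \<Longrightarrow> A \<inter> A' = {}" for A A'
  proof (rule ccontr)
    assume A: "A \<in> F" "A' \<in> F" "A \<noteq> A'" "A \<inter> A' \<noteq> {}"
    then obtain a a' x where aa: "a \<in> E h k" "a' \<in> E h k" "A = B a" "A' = B a'" "x \<in> B a" "x \<in> B a'"
      unfolding F_def by blast
    have "B x = B a" by (rule Beq[OF aa(1) aa(5)])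
    moreover have "B x = B a'" by (rule Beq[OF aa(2) aa(6)])
    ultimately show False using A(3) aa(3,4) by simp
  qed
  have Ffin: "finite F"
  proof (rule disjoint_finite[OF Fs Fdisj])
    fix A assume "A \<in> F"
    then obtain a where a: "a \<in> E h k" "A = B a" unfolding F_def by blast
    then have aD: "a \<in> D" by (simp add: E_def)
    show "measure M A \<ge> real q powr (- real_of_int (k * int CARD('n)))"
      unfolding a B_def using aD D_On lP[OF aD] kb[OF aD] by (intro ball_measure_pos) auto
  next
    show "real q powr (- real_of_int (k * int CARD('n))) > 0" using q_ge2 by simp
  qed
  have dj: "disjoint_family_on (\<lambda>A. A) F" "disjoint_family_on (\<lambda>A. A \<inter> E h (k+1)) F"
    unfolding disjoint_family_on_def using Fdisj by blast+
  have Ek1: "E h (k+1) = (\<Union>A\<in>F. A \<inter> E h (k+1))"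
  proof -
    have "E h (k+1) \<subseteq> \<Union>F" using Ek E_sub[of k "k+1" h] by simp
    then show ?thesis by blast
  qed
  have "measure M (\<Union>A\<in>F. A \<inter> E h (k+1)) = (\<Sum>A\<in>F. measure M (A \<inter> E h (k+1)))"
    using Ffin Fs E_sets[OF g] dj(2)
    by (intro M.finite_measure_finite_Union) auto
  then have "measure M (E h (k+1)) = (\<Sum>A\<in>F. measure M (A \<inter> E h (k+1)))"
    unfolding Ek1[symmetric] .
  also have "\<dots> = (\<Sum>A\<in>F. measure M A / real q)"
  proof (rule sum.cong[OF refl])
    fix A assume "A \<in> F"
    then obtain a where a: "a \<in> E h k" "A = B a" unfolding F_def by blast
    then have aD: "a \<in> D" and ha: "vge v (h a) k" by (auto simp: E_def)
    obtain i0 where i0: "dh i0 a \<noteq> 0" "v (dh i0 a) = ell0 a" using lP[OF aD] by blast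
    show "measure M (A \<inter> E h (k+1)) = measure M A / real q"
      unfolding a B_def
      by (rule hensel_step[OF g aD _ _ i0 ha]) (use lP[OF aD] kb[OF aD] in auto)
  qed
  also have "\<dots> = (\<Sum>A\<in>F. measure M A) / real q" by (simp add: sum_divide_distrib)
  also have "(\<Sum>A\<in>F. measure M A) = measure M (E h k)"
    unfolding Ek using M.finite_measure_finite_Union[OF Ffin _ dj(1)] Fs by simp
  finally show ?thesis .
qed

end


context setting
begin

interpretation M: finite_measure M by (rule fin_M)

lemma abs_pow_val:
  assumes "y \<noteq> 0" "v y = int n"
  shows "abs_pow v q y s = exp (- s * complex_of_real (ln (real q))) ^ n"
proof -
  have q0: "real q > 0" using q_ge2 by simp
  define r where "r = real q powr (- real n)"
  have r0: "r > 0" using q0 unfolding r_def by simp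
  have "abs_pow v q y s = complex_of_real r powr s"
    using assms unfolding abs_pow_def absK_def r_def by simp
  also have "\<dots> = exp (s * complex_of_real (ln r))"
    using r0 by (simp add: powr_def Ln_of_real)
  also have "ln r = - real n * ln (real q)" unfolding r_def by simp
  also have "exp (s * complex_of_real (- real n * ln (real q))) = exp (of_nat n * (- s * complex_of_real (ln (real q))))"
    by (simp add: algebra_simps)
  also have "\<dots> = exp (- s * complex_of_real (ln (real q))) ^ n" by (rule exp_of_nat_mult)
  finally show ?thesis .
qed

lemma integral_formula:
  assumes g: "good v h dh" and s: "Re s > 0"
  shows "(LINT x:D|M. abs_pow v q (h x) s) =
    (\<Sum>n. (measure M (E h (int n)) - measure M (E h (int n + 1))) *\<^sub>R exp (- s * complex_of_real (ln (real q))) ^ n)"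
proof -
  define z where "z = exp (- s * complex_of_real (ln (real q)))"
  define A where "A = (\<lambda>n::nat. E h (int n) - E h (int n + 1))"
  define T where "T = (\<lambda>n x. indicator (A n) x *\<^sub>R z ^ n)"
  have q1: "real q > 1" using q_ge2 by simp
  have nz: "norm z < 1" unfolding z_def using s q1 by simp
  have Asets: "A n \<in> sets M" for n unfolding A_def using E_sets[OF g] by auto
  have AD: "A n \<subseteq> D" for n unfolding A_def E_def by auto
  have pw: "(\<Sum>n. T n x) = indicator D x *\<^sub>R abs_pow v q (h x) s" for x
  proof (cases "x \<in> D")
    case False
    then have "T n x = 0" for n using AD unfolding T_def by (auto simp: indicator_def)
    then show ?thesis using False by simp
  next
    case True
    then have xOn: "x \<in> On v" using D_On by auto
    have hx0: "vge v (h x) 0" using goodD1[OF g xOn] .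
    show ?thesis
    proof (cases "h x = 0")
      case True
      then have "T n x = 0" for n unfolding T_def A_def E_def by (auto simp: indicator_def vge_def)
      then show ?thesis using True by (simp add: abs_pow_def absK_def)
    next
      case False
      define n where "n = nat (v (h x))"
      have vn: "v (h x) = int n" using hx0 False unfolding n_def vge_def by simp
      have "T m x = (if m = n then z ^ n else 0)" for m
        using \<open>x \<in> D\<close> False vn unfolding T_def A_def E_def by (auto simp: indicator_def vge_def)
      then have "(\<lambda>m. T m x) sums z ^ n" using sums_single[of n "\<lambda>m. z ^ n"] by simp
      then have "(\<Sum>m. T m x) = z ^ n" by (rule sums_unique[symmetric])
      then show ?thesis using \<open>x \<in> D\<close> abs_pow_val[OF False vn] unfolding z_def by simp
    qed
  qed
  have intA: "integrable M (indicator (A n) :: _ \<Rightarrow> real)" for n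
    unfolding integrable_indicator_iff using Asets[of n] M.emeasure_finite[of "A n \<inter> space M"]
    by (auto simp: less_top[symmetric])
  have int: "integrable M (T n)" for n
    unfolding T_def using intA by (intro integrable_scaleR_left) auto
  have intT: "integral\<^sup>L M (T n) = measure M (A n) *\<^sub>R z ^ n" for n
  proof -
    have "integral\<^sup>L M (T n) = integral\<^sup>L M (indicator (A n) :: _ \<Rightarrow> real) *\<^sub>R z ^ n"
      unfolding T_def using intA by (intro integral_scaleR_left) auto
    also have "A n \<inter> space M = A n" using AD D_On spaceM by auto
    then have "integral\<^sup>L M (indicator (A n) :: _ \<Rightarrow> real) = measure M (A n)" by simp
    finally show ?thesis .
  qed
  have normT: "norm (T n x) \<le> norm z ^ n" for n x
    unfolding T_def by (simp add: indicator_def norm_power)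
  have geo: "summable (\<lambda>n. norm z ^ n)" using summable_geometric[of "norm z"] nz by simp
  have sum0: "summable (\<lambda>n. norm (T n x))" for x
  proof (rule summable_comparison_test[OF _ geo])
    show "\<exists>N. \<forall>n\<ge>N. norm (norm (T n x)) \<le> norm z ^ n" using normT by simp
  qed
  have sum1: "AE x in M. summable (\<lambda>n. norm (T n x))"
    using sum0 by simp
  have sum2: "summable (\<lambda>n. \<integral>x. norm (T n x) \<partial>M)"
  proof (rule summable_comparison_test[where g="\<lambda>n. measure M (space M) * norm z ^ n"])
    show "summable (\<lambda>n. measure M (space M) * norm z ^ n)"
      using geo by (rule summable_mult)
    show "\<exists>N. \<forall>n\<ge>N. norm (\<integral>x. norm (T n x) \<partial>M) \<le> measure M (space M) * norm z ^ n"
    proof (intro exI allI impI)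
      fix n
      have "(\<integral>x. norm (T n x) \<partial>M) \<le> (\<integral>x. norm z ^ n \<partial>M)"
        using int normT by (intro integral_mono) auto
      also have "\<dots> = measure M (space M) * norm z ^ n" by simp
      finally show "norm (\<integral>x. norm (T n x) \<partial>M) \<le> measure M (space M) * norm z ^ n"
        by (simp add: integral_nonneg_AE)
    qed
  qed
  have "(LINT x:D|M. abs_pow v q (h x) s) = (\<integral>x. (\<Sum>n. T n x) \<partial>M)"
    unfolding set_lebesgue_integral_def pw ..
  also have "\<dots> = (\<Sum>n. integral\<^sup>L M (T n))" by (rule integral_suminf[OF int sum1 sum2])
  also have "\<dots> = (\<Sum>n. measure M (A n) *\<^sub>R z ^ n)" unfolding intT ..
  also have "\<dots> = (\<Sum>n. (measure M (E h (int n)) - measure M (E h (int n + 1))) *\<^sub>R z ^ n)"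
  proof -
    have "measure M (A n) = measure M (E h (int n)) - measure M (E h (int n + 1))" for n
      unfolding A_def using E_sets[OF g] E_sub[of "int n" "int n + 1" h]
      by (intro M.finite_measure_Diff) auto
    then show ?thesis by simp
  qed
  finally show ?thesis unfolding z_def .
qed

end


context padic
begin

lemma perturb:
  assumes "x \<noteq> 0" "v x = l" "vge v y (l + 1)"
  shows "x + y \<noteq> 0 \<and> v (x + y) = l"
proof (rule ccontr)
  assume a: "\<not> (x + y \<noteq> 0 \<and> v (x + y) = l)"
  have "vge v x l" using assms by (simp add: vge_def)
  moreover have "vge v y l" using assms(3) vge_mono by simp
  ultimately have "vge v (x + y) l" by (rule vge_add)
  with a have "vge v (x + y) (l + 1)" by (auto simp: vge_def)
  then have "vge v ((x + y) - y) (l + 1)" using assms(3) by (rule vge_diff)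
  then show False using assms(1,2) by (simp add: vge_def)
qed

end

theorem mainTheorem3:
  fixes v :: "'a::field_char_0 \<Rightarrow> int" and \<pi> :: 'a and q :: nat
    and M :: "('n::finite \<Rightarrow> 'a) measure"
    and D :: "('n \<Rightarrow> 'a) set"
    and f g :: "('n \<Rightarrow> nat) \<Rightarrow> 'a"
    and \<beta> :: int and s :: complex
  assumes K: "is_padic_field v \<pi> q"
    and haar: "is_haar_On v q M"
    and D: "residue_preimage v D"
    and f: "is_poly_over (ring_int v) f"
    and nocrit: "\<forall>P\<in>D. \<not> critical_point f P"
    and g: "is_poly_over (ring_int v) g"
    and beta: "2 * cfD v f D + 1 < ereal (real_of_int \<beta>)"
    and s: "Re s > 0"
  shows "(LINT x:D|M. abs_pow v q (mpoly_eval f x) s)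
       = (LINT x:D|M. abs_pow v q (mpoly_eval f x + \<pi> powi \<beta> * mpoly_eval g x) s)"
proof -
  interpret S: setting v \<pi> q M D
    by (rule setting.intro[OF padic.intro[OF K] setting_axioms.intro[OF haar D]])
  show ?thesis
  proof (cases "D = {}")
    case True
    then show ?thesis by (simp add: set_lebesgue_integral_def)
  next
    case False
    define h1 where "h1 = mpoly_eval f"
    define d1 where "d1 = (\<lambda>i. mpoly_eval (mpoly_pd i f))"
    define dg where "dg = (\<lambda>i. mpoly_eval (mpoly_pd i g))"
    define h2 where "h2 = (\<lambda>x. h1 x + \<pi> powi \<beta> * mpoly_eval g x)"
    define d2 where "d2 = (\<lambda>i x. d1 i x + \<pi> powi \<beta> * dg i x)"
    have g1: "good v h1 d1" unfolding h1_def d1_def by (rule S.good_mpoly[OF f])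
    have gg: "good v (mpoly_eval g) dg" unfolding dg_def by (rule S.good_mpoly[OF g])
    have lP1: "0 \<le> ell v f P \<and> (\<forall>i. vge v (d1 i P) (ell v f P)) \<and> (\<exists>i. d1 i P \<noteq> 0 \<and> v (d1 i P) = ell v f P)"
      if P: "P \<in> D" for P
    proof -
      define Ss where "Ss = {v (d1 i P) |i. d1 i P \<noteq> 0}"
      have ell: "ell v f P = Min Ss" unfolding Ss_def ell_def d1_def ..
      have ne: "Ss \<noteq> {}" using nocrit P unfolding Ss_def critical_point_def d1_def by auto
      have fin: "finite Ss"
      proof -
        have "Ss \<subseteq> range (\<lambda>i. v (d1 i P))" unfolding Ss_def by auto
        then show ?thesis by (rule finite_subset) simp
      qed
      obtain i0 where i0: "d1 i0 P \<noteq> 0" "v (d1 i0 P) = ell v f P"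
        using Min_in[OF fin ne] unfolding ell Ss_def by auto
      have all: "\<forall>i. vge v (d1 i P) (ell v f P)"
      proof
        fix i
        show "vge v (d1 i P) (ell v f P)"
        proof (cases "d1 i P = 0")
          case False
          then have "v (d1 i P) \<in> Ss" unfolding Ss_def by auto
          then show ?thesis using Min_le[OF fin] unfolding ell vge_def by auto
        qed (simp add: vge_def)
      qed
      have POn: "P \<in> On v" using P S.D_On by auto
      have "0 \<le> ell v f P" using S.goodD2[OF g1 POn, of i0] i0 by (simp add: vge_def)
      then show ?thesis using all i0 by blast
    qed
    have bnd: "2 * ell v f P + 2 \<le> \<beta>" if P: "P \<in> D" for P
    proof -
      have "ereal (real_of_int (ell v f P)) \<le> cfD v f D"
        unfolding cfD_def using P by (rule SUP_upper)
      then have "2 * ereal (real_of_int (ell v f P)) + 1 \<le> 2 * cfD v f D + 1"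
        by (intro add_right_mono ereal_mult_left_mono) auto
      then have "2 * ereal (real_of_int (ell v f P)) + 1 < ereal (real_of_int \<beta>)"
        using beta by (rule le_less_trans)
      then have "2 * real_of_int (ell v f P) + 1 < real_of_int \<beta>" by simp
      then show ?thesis by linarith
    qed
    obtain P0 where P0: "P0 \<in> D" using False by blast
    have b0: "0 \<le> \<beta>" using bnd[OF P0] lP1[OF P0] by linarith
    have pb: "vge v (\<pi> powi \<beta>) 0" using b0 by (intro S.vge_powi) auto
    have g2: "good v h2 d2"
    proof -
      have H: "good v (\<lambda>x. h1 x + \<pi> powi \<beta> * mpoly_eval g x)
        (\<lambda>i x. d1 i x + (0 * mpoly_eval g x + \<pi> powi \<beta> * dg i x))"
        by (rule S.good_add[OF g1 S.good_mult[OF S.good_const[OF pb] gg]])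
      show ?thesis unfolding h2_def d2_def by (rule S.good_cong[OF H]) simp
    qed
    have lP2: "0 \<le> ell v f P \<and> (\<forall>i. vge v (d2 i P) (ell v f P)) \<and> (\<exists>i. d2 i P \<noteq> 0 \<and> v (d2 i P) = ell v f P)"
      if P: "P \<in> D" for P
    proof -
      have POn: "P \<in> On v" using P S.D_On by auto
      have l: "0 \<le> ell v f P" "\<forall>i. vge v (d1 i P) (ell v f P)" "\<exists>i. d1 i P \<noteq> 0 \<and> v (d1 i P) = ell v f P"
        using lP1[OF P] by auto
      have pert: "vge v (\<pi> powi \<beta> * dg i P) (ell v f P + 1)" for i
        using S.vge_mult'[OF S.vge_powi[of \<beta> \<beta>] S.goodD2[OF gg POn, of i]] bnd[OF P] l(1) by simp
      have "\<forall>i. vge v (d2 i P) (ell v f P)"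
      proof
        fix i show "vge v (d2 i P) (ell v f P)"
          unfolding d2_def using l(2) S.vge_mono[OF pert[of i]] by (intro S.vge_add) auto
      qed
      moreover obtain i0 where "d1 i0 P \<noteq> 0" "v (d1 i0 P) = ell v f P" using l(3) by blast
      then have "d2 i0 P \<noteq> 0 \<and> v (d2 i0 P) = ell v f P"
        unfolding d2_def using S.perturb pert by blast
      ultimately show ?thesis using l(1) by blast
    qed
    have eqE: "S.E h1 k = S.E h2 k" if k: "k \<le> \<beta>" for k
    proof -
      have "vge v (h1 x) k \<longleftrightarrow> vge v (h2 x) k" if x: "x \<in> D" for x
      proof -
        have xOn: "x \<in> On v" using x S.D_On by auto
        have pg: "vge v (\<pi> powi \<beta> * mpoly_eval g x) k"
          using S.vge_mult'[OF S.vge_powi[of \<beta> \<beta>] S.goodD1[OF gg xOn]] k by simp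
        show ?thesis
        proof
          assume "vge v (h1 x) k"
          then show "vge v (h2 x) k" unfolding h2_def using pg by (rule S.vge_add)
        next
          assume "vge v (h2 x) k"
          then have "vge v (h2 x - \<pi> powi \<beta> * mpoly_eval g x) k" using pg by (rule S.vge_diff)
          then show "vge v (h1 x) k" unfolding h2_def by simp
        qed
      qed
      then show ?thesis unfolding S.E_def by blast
    qed
    have rec1: "measure M (S.E h1 (k+1)) = measure M (S.E h1 k) / real q" if "\<beta> \<le> k" for k
    proof -
      have kb: "\<And>P. P \<in> D \<Longrightarrow> 2 * ell v f P + 1 \<le> k" using that bnd by force
      show ?thesis by (rule S.E_rec[OF g1 lP1 kb])
    qed
    have rec2: "measure M (S.E h2 (k+1)) = measure M (S.E h2 k) / real q" if "\<beta> \<le> k" for k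
    proof -
      have kb: "\<And>P. P \<in> D \<Longrightarrow> 2 * ell v f P + 1 \<le> k" using that bnd by force
      show ?thesis by (rule S.E_rec[OF g2 lP2 kb])
    qed
    have meq: "measure M (S.E h1 (int n)) = measure M (S.E h2 (int n))" for n
    proof (induction n)
      case 0
      then show ?case using eqE[of 0] b0 by simp
    next
      case (Suc n)
      show ?case
      proof (cases "int n + 1 \<le> \<beta>")
        case True
        then have "S.E h1 (int n + 1) = S.E h2 (int n + 1)" by (rule eqE)
        moreover have "int (Suc n) = int n + 1" by simp
        ultimately show ?thesis by (simp only:)
      next
        case False
        then have "\<beta> \<le> int n" by simp
        moreover have "int (Suc n) = int n + 1" by simp
        ultimately show ?thesis using rec1[of "int n"] rec2[of "int n"] Suc by (simp only:)
      qed
    qed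
    have meq1: "measure M (S.E h1 (int n + 1)) = measure M (S.E h2 (int n + 1))" for n
      using meq[of "Suc n"] by (simp add: add.commute)
    have "(LINT x:D|M. abs_pow v q (h1 x) s) = (LINT x:D|M. abs_pow v q (h2 x) s)"
      unfolding S.integral_formula[OF g1 s] S.integral_formula[OF g2 s] meq meq1 ..
    then show ?thesis unfolding h1_def h2_def .
  qed
qed


end
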